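(* Let $\mathcal X,\hat{\mathcal X}$ be finite alphabets, $\{p_\theta\}_{\theta\in\Theta}$ a nonempty family of probability distributions on $\mathcal X$, and $d:\mathcal X\times\hat{\mathcal X}\to[0,\infty)$ a distortion measure. Then the rate distortion function $\hat R^I(D)$ satisfies: (1) $\hat R^I(D)$ is non-increasing in $D$; (2) $\hat R^I(D)$ is a convex function on $[0,+\infty)$.
   Context: For a transition probability matrix $\boldsymbol Q=(q(\hat x|x))$ from $\mathcal X$ to $\hat{\mathcal X}$: maximum expected distortion $\mathbb E_{\boldsymbol Q}[d(X,\hat X)]=\sup_{\theta\in\Theta}\sum_{x,\hat x}p_\theta(x)q(\hat x|x)d(x,\hat x)$; nonlinear mutual information $\overline I[\{p_\theta\}_{\theta\in\Theta};\boldsymbol Q]=\sup_{\theta\in\Theta}\sum_{x,\hat x}p_\theta(x)q(\hat x|x)\log\frac{q(\hat x|x)}{\sum_{x'}q(\hat x|x')p_\theta(x')}$. Rate distortion function: $\hat R^I(D)=\inf\{\overline I[\{p_\theta\};\boldsymbol Q]:\ \boldsymbol Q\text{ with }\mathbb E_{\boldsymbol Q}[d(X,\hat X)]\le D\}$ (infimum of the empty set is $+\infty$). *)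

theory Defs
  imports "HOL-Analysis.Analysis" "HOL-Library.Extended_Real"
begin

definition is_distribution :: "('x::finite \<Rightarrow> real) \<Rightarrow> bool" where
  "is_distribution p \<longleftrightarrow> (\<forall>x. 0 \<le> p x) \<and> (\<Sum>x\<in>UNIV. p x) = 1"

definition is_transition_matrix :: "('x::finite \<Rightarrow> 'y::finite \<Rightarrow> real) \<Rightarrow> bool" where
  "is_transition_matrix Q \<longleftrightarrow> (\<forall>x y. 0 \<le> Q x y) \<and> (\<forall>x. (\<Sum>y\<in>UNIV. Q x y) = 1)"

definition max_exp_distortion ::
  "('t \<Rightarrow> 'x::finite \<Rightarrow> real) \<Rightarrow> 't set \<Rightarrow> ('x \<Rightarrow> 'y::finite \<Rightarrow> real)
     \<Rightarrow> ('x \<Rightarrow> 'y \<Rightarrow> real) \<Rightarrow> ereal" where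
  "max_exp_distortion p \<Theta> d Q =
     (SUP \<theta>\<in>\<Theta>. ereal (\<Sum>x\<in>UNIV. \<Sum>y\<in>UNIV. p \<theta> x * Q x y * d x y))"

definition nonlinear_MI ::
  "('t \<Rightarrow> 'x::finite \<Rightarrow> real) \<Rightarrow> 't set \<Rightarrow> ('x \<Rightarrow> 'y::finite \<Rightarrow> real) \<Rightarrow> ereal" where
  "nonlinear_MI p \<Theta> Q =
     (SUP \<theta>\<in>\<Theta>. ereal (\<Sum>x\<in>UNIV. \<Sum>y\<in>UNIV.
        (if p \<theta> x * Q x y = 0 then 0
         else p \<theta> x * Q x y * ln (Q x y / (\<Sum>x'\<in>UNIV. Q x' y * p \<theta> x')))))"

text \<open>Rate distortion function; INF of the empty set is \<top> = +\<infinity> in ereal.\<close>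
definition rate_distortion ::
  "('t \<Rightarrow> 'x::finite \<Rightarrow> real) \<Rightarrow> 't set \<Rightarrow> ('x \<Rightarrow> 'y::finite \<Rightarrow> real) \<Rightarrow> real \<Rightarrow> ereal" where
  "rate_distortion p \<Theta> d D =
     (INF Q\<in>{Q. is_transition_matrix Q \<and> max_exp_distortion p \<Theta> d Q \<le> ereal D}.
        nonlinear_MI p \<Theta> Q)"

end

theory Submission imports Defs begin

definition gg :: "real \<Rightarrow> real \<Rightarrow> real" where
  "gg a b = (if a = 0 then 0 else a * ln (a / b))"

lemma ln_lower: "0 < z \<Longrightarrow> 1 - 1 / z \<le> ln (z::real)"
proof -
  assume z: "0 < z"
  have "ln (1/z) \<le> 1/z - 1" using z by (intro ln_le_minus_one) auto
  moreover have "ln (1/z) = - ln z" using z by (simp add: ln_div)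
  ultimately show ?thesis by simp
qed

lemma gg_lower:
  assumes "0 \<le> a" "0 \<le> b" "0 < a \<Longrightarrow> 0 < b"
  shows "a - b \<le> gg a b"
proof (cases "a = 0")
  case True then show ?thesis using assms by (simp add: gg_def)
next
  case False
  hence a: "0 < a" using assms by simp
  hence b: "0 < b" using assms by simp
  have "1 - 1 / (a/b) \<le> ln (a/b)" using a b by (intro ln_lower) auto
  hence "a * (1 - 1/(a/b)) \<le> a * ln (a/b)" using a by (intro mult_left_mono) auto
  moreover have "a * (1 - 1/(a/b)) = a - b" using a b by (simp add: field_simps)
  ultimately show ?thesis using False by (simp add: gg_def)
qed

lemma gg_scale:
  assumes "0 \<le> t" shows "gg (t * a) (t * b) = t * gg a b"
  using assms by (cases "t = 0") (auto simp: gg_def)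

lemma gg_sum:
  assumes "0 \<le> a1" "0 \<le> b1" "0 < a1 \<Longrightarrow> 0 < b1"
     "0 \<le> a2" "0 \<le> b2" "0 < a2 \<Longrightarrow> 0 < b2"
  shows "gg (a1 + a2) (b1 + b2) \<le> gg a1 b1 + gg a2 b2"
proof -
  consider "a1 = 0" | "a2 = 0" | "0 < a1 \<and> 0 < a2" using assms by linarith
  then show ?thesis
  proof cases
    case 1
    show ?thesis
    proof (cases "a2 = 0")
      case True then show ?thesis using 1 by (simp add: gg_def)
    next
      case False
      hence "0 < a2" "0 < b2" using assms by auto
      hence "ln (a2 / (b1 + b2)) \<le> ln (a2 / b2)" using assms
        by (subst ln_le_cancel_iff) (auto intro!: divide_left_mono mult_pos_pos)
      hence "a2 * ln (a2 / (b1 + b2)) \<le> a2 * ln (a2 / b2)" using \<open>0 < a2\<close> by simp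
      then show ?thesis using 1 False by (simp add: gg_def)
    qed
  next
    case 2
    show ?thesis
    proof (cases "a1 = 0")
      case True then show ?thesis using 2 by (simp add: gg_def)
    next
      case False
      hence "0 < a1" "0 < b1" using assms by auto
      hence "ln (a1 / (b1 + b2)) \<le> ln (a1 / b1)" using assms
        by (subst ln_le_cancel_iff) (auto intro!: divide_left_mono mult_pos_pos)
      hence "a1 * ln (a1 / (b1 + b2)) \<le> a1 * ln (a1 / b1)" using \<open>0 < a1\<close> by simp
      then show ?thesis using 2 False by (simp add: gg_def)
    qed
  next
    case 3
    hence p: "0 < a1" "0 < a2" "0 < b1" "0 < b2" using assms by auto
    define A where "A = a1 + a2"
    define B where "B = b1 + b2"
    have AB: "0 < A" "0 < B" using p by (auto simp: A_def B_def)
    have key: "a * ln (A/B) + a - b * A / B \<le> a * ln (a / b)" if "0 < a" "0 < b" for a b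
    proof -
      have z: "0 < (a/b) / (A/B)" using that AB by simp
      have "1 - 1 / ((a/b)/(A/B)) \<le> ln ((a/b)/(A/B))" using z by (rule ln_lower)
      also have "\<dots> = ln (a/b) - ln (A/B)" using that AB by (simp add: ln_div ln_mult)
      finally have "a * (1 - 1 / ((a/b)/(A/B))) \<le> a * (ln (a/b) - ln (A/B))"
        using that by (intro mult_left_mono) auto
      moreover have "a * (1 - 1 / ((a/b)/(A/B))) = a - b * A / B"
        using that AB by (simp add: field_simps)
      ultimately show ?thesis by (simp add: algebra_simps)
    qed
    have "A * ln (A/B) = (a1 * ln (A/B) + a1 - b1 * A / B) + (a2 * ln (A/B) + a2 - b2 * A / B)"
    proof -
      have e: "b1 * A / B + b2 * A / B = A" proof -
        have "b1 * A / B + b2 * A / B = (b1 + b2) * A / B" by (simp add: add_divide_distrib distrib_right)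
        also have "\<dots> = A" using AB by (simp add: B_def)
        finally show ?thesis .
      qed
      have "A * ln (A/B) = (a1 + a2) * ln (A/B)" by (simp add: A_def)
      also have "\<dots> = a1 * ln (A/B) + a2 * ln (A/B) + (a1 + a2) - (b1 * A / B + b2 * A / B)"
        by (simp only: e) (simp add: A_def algebra_simps)
      finally show ?thesis by simp
    qed
    also have "\<dots> \<le> a1 * ln (a1/b1) + a2 * ln (a2/b2)"
      using key[OF p(1) p(3)] key[OF p(2) p(4)] by simp
    finally show ?thesis using p AB by (simp add: gg_def A_def B_def)
  qed
qed

lemma gg_convex:
  assumes "0 \<le> a1" "0 \<le> b1" "0 < a1 \<Longrightarrow> 0 < b1"
     "0 \<le> a2" "0 \<le> b2" "0 < a2 \<Longrightarrow> 0 < b2" "0 \<le> t" "t \<le> 1"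
  shows "gg (t * a1 + (1 - t) * a2) (t * b1 + (1 - t) * b2) \<le> t * gg a1 b1 + (1 - t) * gg a2 b2"
proof -
  have "gg (t * a1 + (1 - t) * a2) (t * b1 + (1 - t) * b2) \<le> gg (t*a1) (t*b1) + gg ((1-t)*a2) ((1-t)*b2)"
    using assms by (intro gg_sum) (auto simp: zero_less_mult_iff)
  also have "\<dots> = t * gg a1 b1 + (1 - t) * gg a2 b2" using assms by (simp add: gg_scale)
  finally show ?thesis .
qed

lemma ereal_mult_INF:
  fixes f :: "'a \<Rightarrow> ereal"
  assumes c: "0 < c"
  shows "ereal c * (INF i\<in>I. f i) = (INF i\<in>I. ereal c * f i)"
proof (rule antisym)
  show "ereal c * (INF i\<in>I. f i) \<le> (INF i\<in>I. ereal c * f i)"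
    using c by (intro INF_greatest ereal_mult_left_mono INF_lower) auto
next
  define g where "g = (INF i\<in>I. ereal c * f i)"
  have inv: "ereal (1/c) * (ereal c * z) = z" "ereal c * (ereal (1/c) * z) = z" for z
    using c by (cases z; simp)+
  have "ereal (1/c) * g \<le> f i" if "i \<in> I" for i
  proof -
    have "ereal (1/c) * g \<le> ereal (1/c) * (ereal c * f i)"
      unfolding g_def using c that by (intro ereal_mult_left_mono INF_lower) auto
    also have "\<dots> = f i" by (rule inv)
    finally show ?thesis .
  qed
  hence "ereal (1/c) * g \<le> (INF i\<in>I. f i)" by (intro INF_greatest)
  hence "ereal c * (ereal (1/c) * g) \<le> ereal c * (INF i\<in>I. f i)"
    using c by (intro ereal_mult_left_mono) auto
  moreover have "ereal c * (ereal (1/c) * g) = g"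
    by (rule inv)
  ultimately show "(INF i\<in>I. ereal c * f i) \<le> ereal c * (INF i\<in>I. f i)"
    unfolding g_def by simp
qed

definition fth :: "('x::finite \<Rightarrow> real) \<Rightarrow> ('x \<Rightarrow> 'y::finite \<Rightarrow> real) \<Rightarrow> real" where
  "fth pt Q = (\<Sum>x\<in>UNIV. \<Sum>y\<in>UNIV.
        (if pt x * Q x y = 0 then 0
         else pt x * Q x y * ln (Q x y / (\<Sum>x'\<in>UNIV. Q x' y * pt x'))))"

lemma MI_eq: "nonlinear_MI p \<Theta> Q = (SUP \<theta>\<in>\<Theta>. ereal (fth (p \<theta>) Q))"
  by (simp add: nonlinear_MI_def fth_def)

lemma fth_eq: "fth pt Q = (\<Sum>x\<in>UNIV. \<Sum>y\<in>UNIV.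
     gg (pt x * Q x y) (pt x * (\<Sum>x'\<in>UNIV. Q x' y * pt x')))"
  unfolding fth_def gg_def
  by (intro sum.cong refl) (auto simp: field_simps)

lemma pos_cond:
  assumes "is_distribution pt" "is_transition_matrix Q"
  shows "0 < pt x * Q x y \<Longrightarrow> 0 < pt x * (\<Sum>x'\<in>UNIV. Q x' y * pt x')"
proof -
  assume h: "0 < pt x * Q x y"
  have nn: "0 \<le> pt x" "0 \<le> Q x y" using assms by (auto simp: is_distribution_def is_transition_matrix_def)
  hence px: "0 < pt x" and q: "0 < Q x y" using h by (auto simp: zero_less_mult_iff)
  have "Q x y * pt x \<le> (\<Sum>x'\<in>UNIV. Q x' y * pt x')"
    using assms by (intro member_le_sum) (auto simp: is_distribution_def is_transition_matrix_def)
  moreover have "0 < Q x y * pt x" using px q by simp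
  ultimately show ?thesis using px by simp
qed

lemma nn_cond:
  assumes "is_distribution pt" "is_transition_matrix Q"
  shows "0 \<le> pt x * Q x y" "0 \<le> pt x * (\<Sum>x'\<in>UNIV. Q x' y * pt x')"
  using assms by (auto simp: is_distribution_def is_transition_matrix_def intro!: sum_nonneg mult_nonneg_nonneg)

lemma fth_nonneg:
  assumes D: "is_distribution pt" and T: "is_transition_matrix Q"
  shows "0 \<le> fth pt Q"
proof -
  have s1: "(\<Sum>x\<in>UNIV. \<Sum>y\<in>UNIV. pt x * Q x y) = 1"
    using assms by (simp add: is_distribution_def is_transition_matrix_def sum_distrib_left[symmetric])
  have "(\<Sum>x\<in>UNIV. \<Sum>y\<in>UNIV. pt x * (\<Sum>x'\<in>UNIV. Q x' y * pt x'))
      = (\<Sum>x\<in>UNIV. pt x) * (\<Sum>y\<in>UNIV. \<Sum>x'\<in>UNIV. Q x' y * pt x')"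
    by (rule sum_product[symmetric])
  also have "(\<Sum>y\<in>UNIV. \<Sum>x'\<in>UNIV. Q x' y * pt x') = (\<Sum>x'\<in>UNIV. \<Sum>y\<in>UNIV. Q x' y * pt x')"
    by (rule sum.swap)
  also have "\<dots> = (\<Sum>x'\<in>UNIV. pt x')"
    using T by (simp add: is_transition_matrix_def sum_distrib_right[symmetric])
  finally have s2: "(\<Sum>x\<in>UNIV. \<Sum>y\<in>UNIV. pt x * (\<Sum>x'\<in>UNIV. Q x' y * pt x')) = 1"
    using D by (simp add: is_distribution_def)
  have "0 = (\<Sum>x\<in>UNIV. \<Sum>y\<in>UNIV. pt x * Q x y - pt x * (\<Sum>x'\<in>UNIV. Q x' y * pt x'))"
    using s1 s2 by (simp add: sum_subtractf)
  also have "\<dots> \<le> fth pt Q"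
    unfolding fth_eq
    by (intro sum_mono gg_lower nn_cond[OF D T] pos_cond[OF D T])
  finally show ?thesis .
qed

lemma fth_convex:
  assumes D: "is_distribution pt" and T1: "is_transition_matrix Q1" and T2: "is_transition_matrix Q2"
    and t: "0 \<le> t" "t \<le> 1"
  shows "fth pt (\<lambda>x y. t * Q1 x y + (1 - t) * Q2 x y) \<le> t * fth pt Q1 + (1 - t) * fth pt Q2"
proof -
  have lin: "(\<Sum>x'\<in>UNIV. (t * Q1 x' y + (1 - t) * Q2 x' y) * pt x')
     = t * (\<Sum>x'\<in>UNIV. Q1 x' y * pt x') + (1 - t) * (\<Sum>x'\<in>UNIV. Q2 x' y * pt x')" for y
    by (simp add: distrib_right sum.distrib sum_distrib_left mult.assoc)
  have "fth pt (\<lambda>x y. t * Q1 x y + (1 - t) * Q2 x y) =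
     (\<Sum>x\<in>UNIV. \<Sum>y\<in>UNIV. gg (t * (pt x * Q1 x y) + (1 - t) * (pt x * Q2 x y))
        (t * (pt x * (\<Sum>x'\<in>UNIV. Q1 x' y * pt x')) + (1 - t) * (pt x * (\<Sum>x'\<in>UNIV. Q2 x' y * pt x'))))"
    unfolding fth_eq lin by (intro sum.cong refl arg_cong2[where f=gg]) (simp_all add: algebra_simps)
  also have "\<dots> \<le> (\<Sum>x\<in>UNIV. \<Sum>y\<in>UNIV. t * gg (pt x * Q1 x y) (pt x * (\<Sum>x'\<in>UNIV. Q1 x' y * pt x'))
       + (1 - t) * gg (pt x * Q2 x y) (pt x * (\<Sum>x'\<in>UNIV. Q2 x' y * pt x')))"
    by (intro sum_mono gg_convex nn_cond[OF D T1] pos_cond[OF D T1] nn_cond[OF D T2] pos_cond[OF D T2] t)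
  also have "\<dots> = t * fth pt Q1 + (1 - t) * fth pt Q2"
    unfolding fth_eq by (simp add: sum.distrib sum_distrib_left)
  finally show ?thesis .
qed

theorem theorem13:
  fixes p :: "'t \<Rightarrow> 'x::finite \<Rightarrow> real"
    and \<Theta> :: "'t set"
    and d :: "'x \<Rightarrow> 'y::finite \<Rightarrow> real"
  assumes "\<Theta> \<noteq> {}"
    and "\<And>\<theta>. \<theta> \<in> \<Theta> \<Longrightarrow> is_distribution (p \<theta>)"
    and "\<And>x y. 0 \<le> d x y"
  shows "(\<forall>D1 D2. D1 \<le> D2 \<longrightarrow> rate_distortion p \<Theta> d D2 \<le> rate_distortion p \<Theta> d D1)
       \<and> (\<forall>D1 D2 (t::real). 0 \<le> D1 \<longrightarrow> 0 \<le> D2 \<longrightarrow> 0 \<le> t \<longrightarrow> t \<le> 1 \<longrightarrow>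
            rate_distortion p \<Theta> d (t * D1 + (1 - t) * D2)
              \<le> ereal t * rate_distortion p \<Theta> d D1 + ereal (1 - t) * rate_distortion p \<Theta> d D2)"
proof -
  note ne = assms(1) and dist = assms(2)
  define F where "F D = {Q. is_transition_matrix Q \<and> max_exp_distortion p \<Theta> d Q \<le> ereal D}" for D
  define MI where "MI Q = nonlinear_MI p \<Theta> (Q :: 'x \<Rightarrow> 'y \<Rightarrow> real)" for Q
  have R: "rate_distortion p \<Theta> d D = (INF Q\<in>F D. MI Q)" for D
    by (simp add: rate_distortion_def F_def MI_def)
  obtain \<theta>0 where th0: "\<theta>0 \<in> \<Theta>" using ne by blast
  have MI_nn: "0 \<le> MI Q" if "is_transition_matrix Q" for Q
  proof -
    have "ereal 0 \<le> ereal (fth (p \<theta>0) Q)" using fth_nonneg[OF dist[OF th0] that] by simp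
    also have "\<dots> \<le> MI Q" unfolding MI_def MI_eq using th0 by (rule SUP_upper)
    finally show ?thesis by (simp add: zero_ereal_def)
  qed
  define mix where "mix t Q1 Q2 = (\<lambda>x y. t * Q1 x y + (1 - t) * (Q2 x y :: real))" for t and Q1 Q2 :: "'x \<Rightarrow> 'y \<Rightarrow> real"
  have mixF: "mix t Q1 Q2 \<in> F (t * D1 + (1 - t) * D2)"
    if Q: "Q1 \<in> F D1" "Q2 \<in> F D2" and t: "0 \<le> t" "t \<le> 1" for Q1 Q2 t D1 D2
  proof -
    have T: "is_transition_matrix Q1" "is_transition_matrix Q2" using Q by (auto simp: F_def)
    have TM: "is_transition_matrix (mix t Q1 Q2)"
      using T t unfolding is_transition_matrix_def mix_def
      by (auto simp: sum.distrib sum_distrib_left[symmetric])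
    have "max_exp_distortion p \<Theta> d (mix t Q1 Q2) \<le> ereal (t * D1 + (1 - t) * D2)"
      unfolding max_exp_distortion_def
    proof (rule SUP_least)
      fix \<theta> assume th: "\<theta> \<in> \<Theta>"
      define e where "e Q = (\<Sum>x\<in>UNIV. \<Sum>y\<in>UNIV. p \<theta> x * Q x y * d x y)" for Q
      have e_le: "e Q \<le> D" if "Q \<in> F D" for Q D
      proof -
        have "ereal (e Q) \<le> max_exp_distortion p \<Theta> d Q"
          unfolding max_exp_distortion_def e_def using th by (rule SUP_upper)
        also have "\<dots> \<le> ereal D" using that by (simp add: F_def)
        finally show ?thesis by simp
      qed
      have "e (mix t Q1 Q2) = t * e Q1 + (1 - t) * e Q2"
      proof -
        have "p \<theta> x * mix t Q1 Q2 x y * d x y = t * (p \<theta> x * Q1 x y * d x y) + (1 - t) * (p \<theta> x * Q2 x y * d x y)" for x y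
          unfolding mix_def by (simp add: algebra_simps)
        then show ?thesis unfolding e_def by (simp add: sum.distrib sum_distrib_left)
      qed
      also have "\<dots> \<le> t * D1 + (1 - t) * D2"
        using e_le[OF Q(1)] e_le[OF Q(2)] t by (intro add_mono mult_left_mono) auto
      finally show "ereal (\<Sum>x\<in>UNIV. \<Sum>y\<in>UNIV. p \<theta> x * mix t Q1 Q2 x y * d x y)
          \<le> ereal (t * D1 + (1 - t) * D2)" by (simp add: e_def)
    qed
    then show ?thesis using TM by (simp add: F_def)
  qed
  have mixMI: "MI (mix t Q1 Q2) \<le> ereal t * MI Q1 + ereal (1 - t) * MI Q2"
    if T: "is_transition_matrix Q1" "is_transition_matrix Q2" and t: "0 \<le> t" "t \<le> 1" for Q1 Q2 t
    unfolding MI_def MI_eq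
  proof (rule SUP_least)
    fix \<theta> assume th: "\<theta> \<in> \<Theta>"
    have "ereal (fth (p \<theta>) (mix t Q1 Q2)) \<le> ereal (t * fth (p \<theta>) Q1 + (1 - t) * fth (p \<theta>) Q2)"
      unfolding mix_def using fth_convex[OF dist[OF th] T t] by simp
    also have "\<dots> = ereal t * ereal (fth (p \<theta>) Q1) + ereal (1 - t) * ereal (fth (p \<theta>) Q2)" by simp
    also have "\<dots> \<le> ereal t * (SUP \<theta>\<in>\<Theta>. ereal (fth (p \<theta>) Q1)) + ereal (1 - t) * (SUP \<theta>\<in>\<Theta>. ereal (fth (p \<theta>) Q2))"
      using th t by (intro add_mono ereal_mult_left_mono SUP_upper) auto
    finally show "ereal (fth (p \<theta>) (mix t Q1 Q2)) \<le> \<dots>" .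
  qed
  have part1: "rate_distortion p \<Theta> d D2 \<le> rate_distortion p \<Theta> d D1" if "D1 \<le> D2" for D1 D2
  proof -
    have "F D1 \<subseteq> F D2" using that unfolding F_def by (auto intro: order_trans)
    then show ?thesis unfolding R by (rule INF_superset_mono) simp
  qed
  have part2: "rate_distortion p \<Theta> d (t * D1 + (1 - t) * D2)
              \<le> ereal t * rate_distortion p \<Theta> d D1 + ereal (1 - t) * rate_distortion p \<Theta> d D2"
    if t: "0 \<le> t" "t \<le> 1" for D1 D2 t
  proof -
    consider "t = 0" | "t = 1" | "0 < t \<and> t < 1" using t by linarith
    then show ?thesis
    proof cases
      case 1 then show ?thesis by (simp add: zero_ereal_def[symmetric])
    next
      case 2 then show ?thesis by (simp add: one_ereal_def[symmetric] zero_ereal_def[symmetric])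
    next
      case 3
      hence t0: "0 < t" and t1: "0 < 1 - t" by auto
      have Rnn: "0 \<le> rate_distortion p \<Theta> d D" for D
        unfolding R by (rule INF_greatest) (auto simp: F_def intro: MI_nn)
      show ?thesis
      proof (cases "F D1 = {} \<or> F D2 = {}")
        case True
        then show ?thesis
        proof
          assume "F D1 = {}"
          hence "rate_distortion p \<Theta> d D1 = \<infinity>" unfolding R by (simp add: top_ereal_def)
          moreover have "0 \<le> ereal (1 - t) * rate_distortion p \<Theta> d D2" using t1 Rnn by simp
          ultimately show ?thesis using t0 by simp
        next
          assume "F D2 = {}"
          hence "rate_distortion p \<Theta> d D2 = \<infinity>" unfolding R by (simp add: top_ereal_def)
          moreover have "0 \<le> ereal t * rate_distortion p \<Theta> d D1" using t0 Rnn by simp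
          ultimately show ?thesis using t1 by simp
        qed
      next
        case False
        hence F1: "F D1 \<noteq> {}" and F2: "F D2 \<noteq> {}" by auto
        let ?L = "rate_distortion p \<Theta> d (t * D1 + (1 - t) * D2)"
        have Fnn: "0 \<le> ereal c * MI Q" if "Q \<in> F D" "0 \<le> c" for Q D c
          using that MI_nn by (auto simp: F_def)
        have step1: "?L \<le> ereal t * MI Q1 + ereal (1 - t) * MI Q2" if "Q1 \<in> F D1" "Q2 \<in> F D2" for Q1 Q2
        proof -
          have "?L \<le> MI (mix t Q1 Q2)" unfolding R by (rule INF_lower) (rule mixF[OF that t])
          also have "\<dots> \<le> ereal t * MI Q1 + ereal (1 - t) * MI Q2"
            using that t by (intro mixMI) (auto simp: F_def)
          finally show ?thesis .
        qed
        have step2: "?L \<le> (INF Q1\<in>F D1. ereal t * MI Q1) + ereal (1 - t) * MI Q2" if "Q2 \<in> F D2" for Q2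
        proof -
          have "?L \<le> (INF Q1\<in>F D1. ereal t * MI Q1 + ereal (1 - t) * MI Q2)"
            using step1 that by (intro INF_greatest) auto
          also have "\<dots> = (INF Q1\<in>F D1. ereal t * MI Q1) + ereal (1 - t) * MI Q2"
            using F1 Fnn[OF that, of "1 - t"] t0 t1
            by (intro INF_ereal_add_left) (auto intro: Fnn)
          finally show ?thesis .
        qed
        have "?L \<le> (INF Q2\<in>F D2. (INF Q1\<in>F D1. ereal t * MI Q1) + ereal (1 - t) * MI Q2)"
          using step2 by (intro INF_greatest) auto
        also have "\<dots> = (INF Q1\<in>F D1. ereal t * MI Q1) + (INF Q2\<in>F D2. ereal (1 - t) * MI Q2)"
        proof -
          have "0 \<le> (INF Q1\<in>F D1. ereal t * MI Q1)"
            using t0 by (intro INF_greatest Fnn) auto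
          then show ?thesis using F2 t0 t1 by (intro INF_ereal_add_right) (auto intro!: Fnn)
        qed
        also have "\<dots> = ereal t * rate_distortion p \<Theta> d D1 + ereal (1 - t) * rate_distortion p \<Theta> d D2"
          unfolding R using t0 t1 by (simp add: ereal_mult_INF)
        finally show ?thesis .
      qed
    qed
  qed
  show ?thesis using part1 part2 by blast
qed

end
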